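(* Let $\kappa\ge3$. For any GTR parameters $\boldsymbol\pi,Q$ and any matrix $U$ diagonalizing $Q$ as in the context, there exist indices $i,j,k\in\{2,\dots,\kappa\}$ with $\nu_{ijk}\neq0$.
   Context: $\boldsymbol\pi=(\pi_1,\dots,\pi_\kappa)$ with $\pi_i>0$ and $\sum\pi_i=1$; $Q$ a $\kappa\times\kappa$ matrix with positive off-diagonal entries, zero row sums and $\operatorname{diag}(\boldsymbol\pi)Q$ symmetric. $U$ is a real matrix with $Q=U\operatorname{diag}(0,\lambda_2,\dots,\lambda_\kappa)U^{-1}$, $0>\lambda_2\ge\dots\ge\lambda_\kappa$, $UU^T=\operatorname{diag}(\boldsymbol\pi)^{-1}$ (equivalently $U^T\operatorname{diag}(\boldsymbol\pi)U=I$), and first column $\mathbf 1$. $\nu_{ijk}=\sum_l\pi_lU_{li}U_{lj}U_{lk}$. *)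

theory Defs
  imports "Jordan_Normal_Form.Matrix"
begin

(* Indices are 0-based: the paper's index l \<in> {1..\<kappa>} is l-1 \<in> {0..<\<kappa>}. *)
definition nu :: "nat \<Rightarrow> (nat \<Rightarrow> real) \<Rightarrow> real mat \<Rightarrow> nat \<Rightarrow> nat \<Rightarrow> nat \<Rightarrow> real" where
  "nu \<kappa> p U i j k = (\<Sum>l<\<kappa>. p l * U $$ (l,i) * U $$ (l,j) * U $$ (l,k))"

end

theory Submission
  imports Defs
begin

theorem proposition2:
  fixes \<kappa> :: nat and p lam :: "nat \<Rightarrow> real" and Q U :: "real mat"
  assumes "\<kappa> \<ge> 3"
    and "\<forall>i<\<kappa>. p i > 0" and "(\<Sum>i<\<kappa>. p i) = 1"
    and "Q \<in> carrier_mat \<kappa> \<kappa>"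
    and "\<forall>i<\<kappa>. \<forall>j<\<kappa>. i \<noteq> j \<longrightarrow> Q $$ (i,j) > 0"
    and "\<forall>i<\<kappa>. (\<Sum>j<\<kappa>. Q $$ (i,j)) = 0"
    and "mat_diag \<kappa> p * Q = transpose_mat (mat_diag \<kappa> p * Q)"
    and "U \<in> carrier_mat \<kappa> \<kappa>"
    and "\<exists>V \<in> carrier_mat \<kappa> \<kappa>. inverts_mat U V \<and> inverts_mat V U \<and>
           Q = U * mat_diag \<kappa> (\<lambda>i. if i = 0 then 0 else lam i) * V"
    and "lam 1 < 0"
    and "\<forall>i j. 1 \<le> i \<longrightarrow> i \<le> j \<longrightarrow> j < \<kappa> \<longrightarrow> lam j \<le> lam i"
    and "U * transpose_mat U = mat_diag \<kappa> (\<lambda>i. 1 / p i)"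
    and "\<forall>l<\<kappa>. U $$ (l,0) = 1"
  shows "\<exists>i\<in>{1..<\<kappa>}. \<exists>j\<in>{1..<\<kappa>}. \<exists>k\<in>{1..<\<kappa>}. nu \<kappa> p U i j k \<noteq> 0"
proof (rule ccontr)
  assume H: "\<not> ?thesis"
  hence nu0: "\<And>i j k. 1 \<le> i \<Longrightarrow> i < \<kappa> \<Longrightarrow> 1 \<le> j \<Longrightarrow> j < \<kappa> \<Longrightarrow> 1 \<le> k \<Longrightarrow> k < \<kappa> \<Longrightarrow>
     (\<Sum>l<\<kappa>. p l * U $$ (l,i) * U $$ (l,j) * U $$ (l,k)) = 0"
    unfolding nu_def by auto
  have Uc: "U \<in> carrier_mat \<kappa> \<kappa>" by fact
  obtain V where Vc: "V \<in> carrier_mat \<kappa> \<kappa>" and UV: "U * V = 1\<^sub>m \<kappa>" and VU: "V * U = 1\<^sub>m \<kappa>"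
    using assms(9) Uc unfolding inverts_mat_def by auto
  define W where "W = transpose_mat U * mat_diag \<kappa> p"
  have Wc: "W \<in> carrier_mat \<kappa> \<kappa>" using Uc unfolding W_def by auto
  have Wi: "\<And>i j. i < \<kappa> \<Longrightarrow> j < \<kappa> \<Longrightarrow> W $$ (i,j) = U $$ (j,i) * p j"
    unfolding W_def using Uc by (subst mat_diag_mult_right[of _ \<kappa>]) auto
  have DD: "mat_diag \<kappa> (\<lambda>i. 1 / p i) * mat_diag \<kappa> p = 1\<^sub>m \<kappa>"
    using assms(2) unfolding mat_diag_diag by (auto intro!: eq_matI simp: mat_diag_def)
  have UW: "U * W = 1\<^sub>m \<kappa>"
  proof -
    have "U * W = (U * transpose_mat U) * mat_diag \<kappa> p"
      unfolding W_def using Uc by (simp add: assoc_mult_mat[of _ \<kappa> \<kappa> _ \<kappa> _ \<kappa>])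
    also have "\<dots> = 1\<^sub>m \<kappa>" using assms(12) DD by simp
    finally show ?thesis .
  qed
  have "V = V * (U * W)" using UW Vc by simp
  also have "\<dots> = (V * U) * W" using Vc Uc Wc by (simp add: assoc_mult_mat[of _ \<kappa> \<kappa> _ \<kappa> _ \<kappa>])
  also have "\<dots> = W" using VU Wc by simp
  finally have "V = W" .
  hence WU: "W * U = 1\<^sub>m \<kappa>" using VU by simp
  have G: "\<And>i j. i < \<kappa> \<Longrightarrow> j < \<kappa> \<Longrightarrow> (\<Sum>l<\<kappa>. p l * U $$ (l,i) * U $$ (l,j)) = (if i = j then 1 else 0)"
  proof -
    fix i j assume ij: "i < \<kappa>" "j < \<kappa>"
    have "(W * U) $$ (i,j) = (\<Sum>l<\<kappa>. W $$ (i,l) * U $$ (l,j))"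
      using Wc Uc ij by (simp add: scalar_prod_def lessThan_atLeast0)
    also have "\<dots> = (\<Sum>l<\<kappa>. p l * U $$ (l,i) * U $$ (l,j))"
      using Wi ij by (intro sum.cong) auto
    finally show "(\<Sum>l<\<kappa>. p l * U $$ (l,i) * U $$ (l,j)) = (if i = j then 1 else 0)"
      using WU ij by simp
  qed
  have key: "\<And>w. (\<And>k. k < \<kappa> \<Longrightarrow> (\<Sum>m<\<kappa>. p m * U $$ (m,k) * w m) = 0) \<Longrightarrow> \<forall>l<\<kappa>. w l = 0"
  proof (intro allI impI)
    fix w :: "nat \<Rightarrow> real" and l assume hw: "\<And>k. k < \<kappa> \<Longrightarrow> (\<Sum>m<\<kappa>. p m * U $$ (m,k) * w m) = 0"
      and l: "l < \<kappa>"
    have "w l = (\<Sum>m<\<kappa>. (U * W) $$ (l,m) * w m)"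
    proof -
      have "(\<Sum>m<\<kappa>. (U * W) $$ (l,m) * w m) = (\<Sum>m<\<kappa>. (if l = m then w m else 0))"
        using UW l by (intro sum.cong) auto
      also have "\<dots> = w l" using l by (simp add: sum.delta)
      finally show ?thesis by simp
    qed
    also have "\<dots> = (\<Sum>m<\<kappa>. (\<Sum>k<\<kappa>. U $$ (l,k) * (U $$ (m,k) * p m)) * w m)"
      using Uc Wc l Wi by (intro sum.cong) (auto simp: scalar_prod_def lessThan_atLeast0 intro!: sum.cong)
    also have "\<dots> = (\<Sum>k<\<kappa>. U $$ (l,k) * (\<Sum>m<\<kappa>. p m * U $$ (m,k) * w m))"
    proof -
      have "(\<Sum>m<\<kappa>. (\<Sum>k<\<kappa>. U $$ (l,k) * (U $$ (m,k) * p m)) * w m)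
          = (\<Sum>m<\<kappa>. \<Sum>k<\<kappa>. U $$ (l,k) * (U $$ (m,k) * p m) * w m)"
        by (simp only: sum_distrib_right)
      also have "\<dots> = (\<Sum>k<\<kappa>. \<Sum>m<\<kappa>. U $$ (l,k) * (U $$ (m,k) * p m) * w m)"
        by (rule sum.swap)
      also have "\<dots> = (\<Sum>k<\<kappa>. U $$ (l,k) * (\<Sum>m<\<kappa>. p m * U $$ (m,k) * w m))"
        by (simp only: sum_distrib_left) (intro sum.cong refl, simp add: algebra_simps)
      finally show ?thesis .
    qed
    also have "\<dots> = 0" using hw by simp
    finally show "w l = 0" .
  qed
  have k1: "1 < \<kappa>" "2 < \<kappa>" using assms(1) by auto
  have A: "\<forall>l<\<kappa>. U $$ (l,1) * U $$ (l,2) = 0"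
  proof (rule key)
    fix k assume k: "k < \<kappa>"
    show "(\<Sum>m<\<kappa>. p m * U $$ (m,k) * (U $$ (m,1) * U $$ (m,2))) = 0"
    proof (cases "k = 0")
      case True
      then show ?thesis using G[of 1 2] k1 assms(13) by (simp add: mult_ac)
    next
      case False
      then show ?thesis using nu0[of 1 2 k] k1 k by (simp add: mult_ac)
    qed
  qed
  have B: "\<And>i. 1 \<le> i \<Longrightarrow> i < \<kappa> \<Longrightarrow> \<forall>l<\<kappa>. U $$ (l,i) * U $$ (l,i) - 1 = 0"
  proof -
    fix i assume i: "1 \<le> i" "i < \<kappa>"
    show "\<forall>l<\<kappa>. U $$ (l,i) * U $$ (l,i) - 1 = 0"
    proof (rule key)
      fix k assume k: "k < \<kappa>"
      have e: "(\<Sum>m<\<kappa>. p m * U $$ (m,k) * (U $$ (m,i) * U $$ (m,i) - 1)) =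
        (\<Sum>m<\<kappa>. p m * U $$ (m,i) * U $$ (m,i) * U $$ (m,k)) - (\<Sum>m<\<kappa>. p m * U $$ (m,k) * U $$ (m,0))"
        using assms(13) by (simp add: sum_subtractf[symmetric] algebra_simps)
      show "(\<Sum>m<\<kappa>. p m * U $$ (m,k) * (U $$ (m,i) * U $$ (m,i) - 1)) = 0"
      proof (cases "k = 0")
        case True
        have "(\<Sum>m<\<kappa>. p m * U $$ (m,i) * U $$ (m,i) * U $$ (m,k)) = (\<Sum>m<\<kappa>. p m * U $$ (m,i) * U $$ (m,i))"
          using True assms(13) by simp
        then show ?thesis unfolding e using G[of i i] G[of 0 0] i True by simp
      next
        case False
        then show ?thesis unfolding e using nu0[of i i k] G[of k 0] i k by simp
      qed
    qed
  qed
  have "U $$ (0,1) * U $$ (0,2) = 0" using A k1 by auto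
  moreover have "U $$ (0,1) * U $$ (0,1) = 1" using B[of 1] k1 by auto
  moreover have "U $$ (0,2) * U $$ (0,2) = 1" using B[of 2] k1 by auto
  moreover have "(U $$ (0,1) * U $$ (0,2)) * (U $$ (0,1) * U $$ (0,2)) = (U $$ (0,1) * U $$ (0,1)) * (U $$ (0,2) * U $$ (0,2))"
    by (simp only: mult_ac)
  ultimately have "(0::real) = 1 * 1" by (metis mult_zero_left)
  then show False by simp
qed

end
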